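(* Let $\varphi:\mathbb R^d\to\mathbb R\cup\{+\infty\}$ be proper, convex, lsc, satisfy property (X) with constant $D$, and suppose that for every $C>0$, $\varphi$ is $C^1$ with Lipschitz continuous derivative $\varphi'$ on $\mathcal D_C(\varphi)$. Then property (U-ii) holds for every $T\in(0,\infty)$: for every $C>0$ and $\alpha_0>0$ there is $R>0$ (depending only on $C$, $\alpha_0$, $T$, $D$ and the Lipschitz constant of $\varphi'$ on $\mathcal D_{DC}(\varphi)$) such that any solutions $\zeta_1,\zeta_2\in W^{1,\infty}(0,T)^d$ of $\alpha_i\dot\zeta_i+\partial\varphi(\zeta_i)\ni g_i$, $\zeta_i(0)=\zeta_{0i}$, with $\zeta_{0i}\in\mathcal D_C(\varphi)$, $\alpha_i\in L^\infty(0,T)$, $\alpha_i\ge\alpha_0$ a.e., $g_i\in L^\infty(0,T)^d$, $|g_i(t)|\le C$ a.e., satisfy for all $t\in(0,T)$ $$\int_0^t|\dot\zeta_1-\dot\zeta_2|\,d\tau+|\zeta_1-\zeta_2|(t)\le R\Big(|\zeta_{01}-\zeta_{02}|+\int_0^t\Big(\Big|\frac1{\alpha_1}-\frac1{\alpha_2}\Big|+|g_1-g_2|\Big)d\tau\Big).$$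
   Context: $\mathcal D_C(\varphi)=\{\chi\in\mathrm{dom}\,\varphi:\exists\xi\in\partial\varphi(\chi),|\xi|\le C\}$. Property (X) with constant $D>0$: for every $C>0$, every $\zeta_0\in\mathcal D_C(\varphi)$, every $\alpha\in L^\infty_{loc}(0,\infty)$ with $\alpha\ge\alpha_0>0$ a.e., and every $g\in L^\infty(0,\infty)^d$ with $|g|\le C$ a.e., the solution of $\alpha\zeta_t+\partial\varphi(\zeta)\ni g$ a.e., $\zeta(0)=\zeta_0$, satisfies $|g(t)-\alpha(t)\zeta_t(t)|\le DC$ a.e. *)

theory Defs
  imports "HOL-Analysis.Analysis"
begin

definition effdom :: "('a \<Rightarrow> ereal) \<Rightarrow> 'a set" where
  "effdom \<phi> = {x. \<phi> x < \<infinity>}"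

definition proper_fun :: "('a \<Rightarrow> ereal) \<Rightarrow> bool" where
  "proper_fun \<phi> \<longleftrightarrow> (\<exists>x. \<phi> x < \<infinity>) \<and> (\<forall>x. \<phi> x > -\<infinity>)"

definition convex_fun :: "('a::real_vector \<Rightarrow> ereal) \<Rightarrow> bool" where
  "convex_fun \<phi> \<longleftrightarrow> (\<forall>x y (l::real). 0 < l \<and> l < 1 \<longrightarrow>
      \<phi> ((1 - l) *\<^sub>R x + l *\<^sub>R y) \<le> ereal (1 - l) * \<phi> x + ereal l * \<phi> y)"

definition lsc_fun :: "('a::topological_space \<Rightarrow> ereal) \<Rightarrow> bool" where
  "lsc_fun \<phi> \<longleftrightarrow> (\<forall>x. \<phi> x \<le> Liminf (at x) \<phi>)"

definition subdiff :: "('a::real_inner \<Rightarrow> ereal) \<Rightarrow> 'a \<Rightarrow> 'a set" where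
  "subdiff \<phi> x = {\<xi>. \<phi> x < \<infinity> \<and> (\<forall>y. \<phi> x + ereal (\<xi> \<bullet> (y - x)) \<le> \<phi> y)}"

definition DC :: "real \<Rightarrow> ('a::real_inner \<Rightarrow> ereal) \<Rightarrow> 'a set" where
  "DC C \<phi> = {z. z \<in> effdom \<phi> \<and> (\<exists>\<xi>\<in>subdiff \<phi> z. norm \<xi> \<le> C)}"

text \<open>\<open>\<zeta> \<in> W^{1,\<infinity>}(0,T)\<close> with (a.e. defined) derivative \<open>\<zeta>'\<close>:
  \<open>\<zeta>'\<close> is essentially bounded and measurable on \<open>(0,T)\<close> and
  \<open>\<zeta>(t) = \<zeta>(0) + \<integral>\<^sub>0\<^sup>t \<zeta>'\<close> for \<open>t \<in> [0,T]\<close>.\<close>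
definition W1inf :: "real \<Rightarrow> (real \<Rightarrow> 'a::euclidean_space) \<Rightarrow> (real \<Rightarrow> 'a) \<Rightarrow> bool" where
  "W1inf T \<zeta> \<zeta>' \<longleftrightarrow>
     \<zeta>' \<in> borel_measurable (lebesgue_on {0..T}) \<and>
     (\<exists>M. AE t in lebesgue_on {0..T}. norm (\<zeta>' t) \<le> M) \<and>
     (\<forall>t\<in>{0..T}. \<zeta> t = \<zeta> 0 + (LINT s:{0..t}|lebesgue. \<zeta>' s))"

definition is_sol :: "('a::euclidean_space \<Rightarrow> ereal) \<Rightarrow> real \<Rightarrow> (real \<Rightarrow> real) \<Rightarrow> (real \<Rightarrow> 'a)
    \<Rightarrow> 'a \<Rightarrow> (real \<Rightarrow> 'a) \<Rightarrow> (real \<Rightarrow> 'a) \<Rightarrow> bool" where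
  "is_sol \<phi> T \<alpha> g \<zeta>0 \<zeta> \<zeta>' \<longleftrightarrow>
     W1inf T \<zeta> \<zeta>' \<and> \<zeta> 0 = \<zeta>0 \<and>
     (AE t in lebesgue_on {0..T}. g t - \<alpha> t *\<^sub>R \<zeta>' t \<in> subdiff \<phi> (\<zeta> t))"

text \<open>Property (X) with constant \<open>D\<close>; solutions on \<open>(0,\<infinity>)\<close> are taken in
  \<open>W^{1,\<infinity>}_{loc}\<close>, i.e. solutions on every \<open>(0,T)\<close>.\<close>
definition propX :: "('a::euclidean_space \<Rightarrow> ereal) \<Rightarrow> real \<Rightarrow> bool" where
  "propX \<phi> D \<longleftrightarrow> D > 0 \<and>
    (\<forall>C>0. \<forall>\<zeta>0\<in>DC C \<phi>. \<forall>(\<alpha>::real\<Rightarrow>real) (\<alpha>0::real) (g::real\<Rightarrow>'a) \<zeta> \<zeta>'.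
       (\<alpha> \<in> borel_measurable (lebesgue_on {0<..}) \<and>
        (\<forall>T>0. \<exists>M. AE t in lebesgue_on {0<..T}. \<bar>\<alpha> t\<bar> \<le> M) \<and>
        \<alpha>0 > 0 \<and> (AE t in lebesgue_on {0<..}. \<alpha> t \<ge> \<alpha>0) \<and>
        g \<in> borel_measurable (lebesgue_on {0<..}) \<and>
        (AE t in lebesgue_on {0<..}. norm (g t) \<le> C) \<and>
        (\<forall>T>0. is_sol \<phi> T \<alpha> g \<zeta>0 \<zeta> \<zeta>'))
       \<longrightarrow> (AE t in lebesgue_on {0<..}. norm (g t - \<alpha> t *\<^sub>R \<zeta>' t) \<le> D * C))"

definition C1_lip_on_DC :: "('a::euclidean_space \<Rightarrow> ereal) \<Rightarrow> ('a \<Rightarrow> 'a) \<Rightarrow> bool" where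
  "C1_lip_on_DC \<phi> \<phi>' \<longleftrightarrow>
    (\<forall>C>0. (\<forall>z\<in>DC C \<phi>. z \<in> interior (effdom \<phi>) \<and>
               ((\<lambda>y. real_of_ereal (\<phi> y)) has_derivative (\<lambda>h. \<phi>' z \<bullet> h)) (at z)) \<and>
           continuous_on (DC C \<phi>) \<phi>' \<and>
           (\<exists>L. \<forall>x\<in>DC C \<phi>. \<forall>y\<in>DC C \<phi>. norm (\<phi>' x - \<phi>' y) \<le> L * norm (x - y)))"

end

theory Submission
  imports Defs
begin


lemma ae_transfer:
  fixes f h :: "real \<Rightarrow> real"
  assumes ae: "AE t in lebesgue_on A. P t" and A: "A \<in> sets lebesgue"
    and fB: "\<And>s. s \<in> B \<Longrightarrow> f s \<in> A'" and A': "A' \<subseteq> A"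
    and hd: "h differentiable_on A'" and hf: "\<And>s. s \<in> B \<Longrightarrow> h (f s) = s"
    and B: "B \<in> sets lebesgue"
  shows "AE s in lebesgue_on B. P (f s)"
proof -
  have "AE t in lebesgue. t \<in> A \<longrightarrow> P t" using ae A by (simp add: AE_restrict_space_iff)
  then obtain N where N: "{t \<in> space lebesgue. \<not> (t \<in> A \<longrightarrow> P t)} \<subseteq> N" "N \<in> null_sets lebesgue"
    unfolding eventually_ae_filter by blast
  have "negligible (N \<inter> A')" using N(2) negligible_iff_null_sets negligible_subset
    by (metis inf_le1)
  hence neg: "negligible (h ` (N \<inter> A'))"
    by (intro negligible_differentiable_image_negligible) (auto intro: differentiable_on_subset[OF hd])
  have sub: "{s \<in> space lebesgue. \<not> (s \<in> B \<longrightarrow> P (f s))} \<subseteq> h ` (N \<inter> A')"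
  proof
    fix s assume "s \<in> {s \<in> space lebesgue. \<not> (s \<in> B \<longrightarrow> P (f s))}"
    then have s: "s \<in> B" "\<not> P (f s)" by auto
    have "f s \<in> N" using N(1) s fB A' by auto
    then show "s \<in> h ` (N \<inter> A')" using s fB hf by (metis IntI image_eqI)
  qed
  have "AE s in lebesgue. s \<in> B \<longrightarrow> P (f s)"
    by (rule AE_I'[OF _ sub]) (use neg negligible_iff_null_sets in auto)
  then show ?thesis using B by (simp add: AE_restrict_space_iff)
qed

lemma AE_on_mono:
  assumes "AE x in lebesgue_on S. P x" "\<And>x. x \<in> S \<Longrightarrow> P x \<Longrightarrow> Q x"
  shows "AE x in lebesgue_on S. Q x"
proof (rule AE_mp[OF assms(1)], rule AE_I2)
  fix x assume "x \<in> space (lebesgue_on S)"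
  then have "x \<in> S" by simp
  then show "P x \<longrightarrow> Q x" using assms(2) by blast
qed

lemma set_integrable_bdd:
  fixes f :: "real \<Rightarrow> 'b::{banach, second_countable_topology}"
  assumes "f \<in> borel_measurable (lebesgue_on {a..b})"
    and "AE x in lebesgue_on {a..b}. norm (f x) \<le> M"
    and "S \<subseteq> {a..b}" "S \<in> sets lebesgue"
  shows "set_integrable lebesgue S f"
proof -
  interpret finite_measure "lebesgue_on {a..b}"
    by (rule finite_measure_lebesgue_on) auto
  have "integrable (lebesgue_on {a..b}) f"
    using integrable_const_bound assms by blast
  then have "set_integrable lebesgue {a..b} f"
    by (simp add: integrable_restrict_space set_integrable_def)
  then show ?thesis using set_integrable_subset assms by blast
qed


lemma ai_meas:
  fixes f :: "real \<Rightarrow> 'b::{banach, second_countable_topology}"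
  assumes "set_integrable lebesgue S f" "S \<in> sets lebesgue"
  shows "f \<in> borel_measurable (lebesgue_on S)"
  using assms unfolding set_integrable_def
  by (subst borel_measurable_restrict_space_iff) (auto dest: borel_measurable_integrable)

lemma theta_facts:
  fixes T :: real
  assumes T: "T > 0"
  defines "\<theta> \<equiv> \<lambda>s. T * (1 - exp (- s))" and "\<psi> \<equiv> \<lambda>t. - ln (1 - t / T)"
  shows theta_der: "\<And>s X. (\<theta> has_field_derivative (T * exp (- s))) (at s within X)"
    and theta_psi: "\<And>t. t < T \<Longrightarrow> \<theta> (\<psi> t) = t"
    and psi_theta: "\<And>s. \<psi> (\<theta> s) = s"
    and theta_range: "\<And>s. 0 \<le> s \<Longrightarrow> \<theta> s \<in> {0..<T}"
    and theta_pos: "\<And>s. 0 < s \<Longrightarrow> 0 < \<theta> s"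
    and psi_diff: "\<psi> differentiable_on {..<T}"
    and theta_diff: "\<theta> differentiable_on UNIV"
    and psi_mono: "\<And>t u. t \<le> u \<Longrightarrow> u < T \<Longrightarrow> \<psi> t \<le> \<psi> u"
    and psi_pos: "\<And>t. 0 < t \<Longrightarrow> t < T \<Longrightarrow> 0 < \<psi> t"
    and psi_nonneg: "\<And>t. 0 \<le> t \<Longrightarrow> t < T \<Longrightarrow> 0 \<le> \<psi> t"
    and theta_inj: "inj_on \<theta> X"
proof -
  show der: "(\<theta> has_field_derivative (T * exp (- s))) (at s within X)" for s X
    unfolding \<theta>_def by (auto intro!: derivative_eq_intros)
  show "\<theta> (\<psi> t) = t" if "t < T" for t
  proof -
    have "1 - t / T > 0" using that T by (simp add: field_simps)
    then show ?thesis unfolding \<theta>_def \<psi>_def using T by (simp add: field_simps)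
  qed
  show "\<psi> (\<theta> s) = s" for s
    unfolding \<theta>_def \<psi>_def using T by (simp add: field_simps ln_exp)
  show "\<theta> s \<in> {0..<T}" if "0 \<le> s" for s
    unfolding \<theta>_def using T that by auto
  show "0 < \<theta> s" if "0 < s" for s
    unfolding \<theta>_def using T that by auto
  show "\<psi> differentiable_on {..<T}"
    unfolding \<psi>_def differentiable_on_def
  proof
    fix t assume "t \<in> {..<T}"
    then have "1 - t / T > 0" using T by (simp add: field_simps)
    then show "(\<lambda>t. - ln (1 - t / T)) differentiable at t within {..<T}"
    proof -
      have "((\<lambda>t. - ln (1 - t / T)) has_field_derivative (inverse (1 - t/T) / T)) (at t within {..<T})"
        using \<open>1 - t / T > 0\<close> T by (auto intro!: derivative_eq_intros simp: field_simps)
      then show ?thesis unfolding has_field_derivative_def differentiable_def by blast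
    qed
  qed
  show "\<theta> differentiable_on UNIV"
    unfolding differentiable_on_def differentiable_def using der unfolding has_field_derivative_def by blast
  show "\<psi> t \<le> \<psi> u" if "t \<le> u" "u < T" for t u
  proof -
    have "1 - u / T > 0" using that T by (simp add: field_simps)
    moreover have "1 - u / T \<le> 1 - t / T" using that T by (simp add: field_simps)
    ultimately show ?thesis unfolding \<psi>_def by simp
  qed
  show "0 < \<psi> t" if "0 < t" "t < T" for t
  proof -
    have "1 - t / T > 0" "1 - t / T < 1" using that T by (simp_all add: field_simps)
    then show ?thesis unfolding \<psi>_def by simp
  qed
  show "0 \<le> \<psi> t" if "0 \<le> t" "t < T" for t
  proof -
    have "1 - t / T > 0" "1 - t / T \<le> 1" using that T by (simp_all add: field_simps)
    then show ?thesis unfolding \<psi>_def by simp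
  qed
  show "inj_on \<theta> X"
    by (metis \<open>\<And>s. \<psi> (\<theta> s) = s\<close> inj_on_inverseI)
qed


lemma cov_theta:
  fixes f :: "real \<Rightarrow> 'a::euclidean_space" and T :: real
  assumes T: "T > 0" and S: "S \<in> sets lebesgue"
    and fi: "f absolutely_integrable_on ((\<lambda>s. T * (1 - exp (- s))) ` S)"
  shows "(\<lambda>s. (T * exp (- s)) *\<^sub>R f (T * (1 - exp (- s)))) absolutely_integrable_on S"
    and "integral S (\<lambda>s. (T * exp (- s)) *\<^sub>R f (T * (1 - exp (- s))))
         = integral ((\<lambda>s. T * (1 - exp (- s))) ` S) f"
proof -
  have abs: "\<bar>T * exp (- s)\<bar> = T * exp (- s)" for s using T by simp
  have *: "(\<lambda>x. \<bar>T * exp (- x)\<bar> *\<^sub>R f (T * (1 - exp (- x)))) absolutely_integrable_on S \<and>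
      integral S (\<lambda>x. \<bar>T * exp (- x)\<bar> *\<^sub>R f (T * (1 - exp (- x)))) = integral ((\<lambda>s. T * (1 - exp (- s))) ` S) f"
    apply (subst has_absolute_integral_change_of_variables_real[OF S])
    using theta_facts(1)[OF T] theta_facts(11)[OF T] fi by auto
  then show "(\<lambda>s. (T * exp (- s)) *\<^sub>R f (T * (1 - exp (- s)))) absolutely_integrable_on S"
    and "integral S (\<lambda>s. (T * exp (- s)) *\<^sub>R f (T * (1 - exp (- s))))
         = integral ((\<lambda>s. T * (1 - exp (- s))) ` S) f"
    unfolding abs by auto
qed

lemma theta_image1:
  fixes T s :: real assumes T: "T > 0" and s: "0 \<le> s"
  shows "(\<lambda>s. T * (1 - exp (- s))) ` {0..s} = {0..T * (1 - exp (- s))}"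
proof -
  note F = theta_facts[OF T]
  show ?thesis
  proof (intro equalityI subsetI)
    fix t assume "t \<in> (\<lambda>s. T * (1 - exp (- s))) ` {0..s}"
    then obtain r where r: "r \<in> {0..s}" "t = T * (1 - exp (- r))" by auto
    then show "t \<in> {0..T * (1 - exp (- s))}" using T by auto
  next
    fix t assume t: "t \<in> {0..T * (1 - exp (- s))}"
    have "T * (1 - exp (- s)) < T" using T by simp
    then have tT: "t < T" using t by simp
    have "t = T * (1 - exp (- (- ln (1 - t / T))))" using F(2)[OF tT] by simp
    moreover have "- ln (1 - t / T) \<in> {0..s}"
    proof -
      have "- ln (1 - t / T) \<le> - ln (1 - (T * (1 - exp (- s))) / T)"
        using F(8)[of t "T * (1 - exp (- s))"] t T by auto
      also have "\<dots> = s" using F(3)[of s] by simp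
      finally show ?thesis using F(10)[of t] t tT by auto
    qed
    ultimately show "t \<in> (\<lambda>s. T * (1 - exp (- s))) ` {0..s}" by blast
  qed
qed

lemma theta_image2:
  fixes T :: real assumes T: "T > 0"
  shows "(\<lambda>s. T * (1 - exp (- s))) ` {0<..} = {0<..<T}"
proof -
  note F = theta_facts[OF T]
  show ?thesis
  proof (intro equalityI subsetI)
    fix t assume "t \<in> (\<lambda>s. T * (1 - exp (- s))) ` {0<..}"
    then obtain r where r: "r > 0" "t = T * (1 - exp (- r))" by auto
    then show "t \<in> {0<..<T}" using T by auto
  next
    fix t assume t: "t \<in> {0<..<T}"
    have "t = T * (1 - exp (- (- ln (1 - t / T))))" using F(2) t by simp
    moreover have "- ln (1 - t / T) \<in> {0<..}" using F(9) t by auto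
    ultimately show "t \<in> (\<lambda>s. T * (1 - exp (- s))) ` {0<..}" by blast
  qed
qed


lemma propX_bound:
  fixes \<phi> :: "real^'d \<Rightarrow> ereal" and \<zeta> \<zeta>' g :: "real \<Rightarrow> real^'d"
  assumes pX: "propX \<phi> D" and T: "T > 0" and C: "C > 0" and a0: "\<alpha>0 > 0"
   and z0: "\<zeta>0 \<in> DC C \<phi>"
   and am: "\<alpha> \<in> borel_measurable (lebesgue_on {0..T})"
   and ab: "AE t in lebesgue_on {0..T}. \<bar>\<alpha> t\<bar> \<le> M"
   and al: "AE t in lebesgue_on {0..T}. \<alpha> t \<ge> \<alpha>0"
   and gm: "g \<in> borel_measurable (lebesgue_on {0..T})"
   and gb: "AE t in lebesgue_on {0..T}. norm (g t) \<le> C"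
   and sol: "is_sol \<phi> T \<alpha> g \<zeta>0 \<zeta> \<zeta>'"
  shows "AE t in lebesgue_on {0..T}. norm (g t - \<alpha> t *\<^sub>R \<zeta>' t) \<le> D * C"
proof -
  note F = theta_facts[OF T]
  from sol obtain Mz where zm: "\<zeta>' \<in> borel_measurable (lebesgue_on {0..T})"
    and zb: "AE t in lebesgue_on {0..T}. norm (\<zeta>' t) \<le> Mz"
    and zi: "\<And>t. t \<in> {0..T} \<Longrightarrow> \<zeta> t = \<zeta> 0 + (LINT s:{0..t}|lebesgue. \<zeta>' s)"
    and z00: "\<zeta> 0 = \<zeta>0"
    and sub: "AE t in lebesgue_on {0..T}. g t - \<alpha> t *\<^sub>R \<zeta>' t \<in> subdiff \<phi> (\<zeta> t)"
    unfolding is_sol_def W1inf_def by blast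
  define \<theta> where "\<theta> = (\<lambda>s::real. T * (1 - exp (- s)))"
  define \<psi> where "\<psi> = (\<lambda>t::real. - ln (1 - t / T))"
  define \<alpha>n where "\<alpha>n = (\<lambda>s. \<alpha> (\<theta> s) / (T * exp (- s)))"
  define gn where "gn = (\<lambda>s. g (\<theta> s))"
  define \<zeta>n where "\<zeta>n = (\<lambda>s. \<zeta> (\<theta> s))"
  define \<zeta>n' where "\<zeta>n' = (\<lambda>s. (T * exp (- s)) *\<^sub>R \<zeta>' (\<theta> s))"
  have th0: "\<theta> 0 = 0" unfolding \<theta>_def by simp
  have pull: "AE s in lebesgue_on B. P (\<theta> s)"
    if "AE t in lebesgue_on {0..T}. P t" "B \<subseteq> {0..}" "B \<in> sets lebesgue" for B P
  proof (rule ae_transfer[OF that(1), where A'="{0..<T}" and h=\<psi>])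
    show "\<theta> s \<in> {0..<T}" if "s \<in> B" for s using F(4) that \<open>B \<subseteq> {0..}\<close> unfolding \<theta>_def by auto
    show "\<psi> differentiable_on {0..<T}" using F(6) unfolding \<psi>_def
      by (rule differentiable_on_subset) auto
    show "\<psi> (\<theta> s) = s" for s using F(3) unfolding \<psi>_def \<theta>_def by simp
  qed (use that in auto)
  have aint: "\<alpha> absolutely_integrable_on {0<..<T}"
    by (rule set_integrable_bdd[OF am]) (use ab in auto)
  have "(\<lambda>s. (T * exp (- s)) *\<^sub>R \<alpha> (\<theta> s)) absolutely_integrable_on {0<..}"
    using cov_theta(1)[OF T _ aint[folded theta_image2[OF T]]] unfolding \<theta>_def by simp
  then have m1: "(\<lambda>s. (T * exp (- s)) *\<^sub>R \<alpha> (\<theta> s)) \<in> borel_measurable (lebesgue_on {0<..})"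
    by (rule ai_meas) simp
  have m2: "(\<lambda>s. exp s / T) \<in> borel_measurable (lebesgue_on {0<..})"
    by (rule continuous_imp_measurable_on_sets_lebesgue) (use T in \<open>auto intro!: continuous_intros\<close>)
  have "\<alpha>n = (\<lambda>s. (exp s / T) * ((exp s / T) * ((T * exp (- s)) *\<^sub>R \<alpha> (\<theta> s))))"
    unfolding \<alpha>n_def using T by (auto simp: field_simps exp_minus)
  then have anm: "\<alpha>n \<in> borel_measurable (lebesgue_on {0<..})"
    using borel_measurable_times[OF m2 borel_measurable_times[OF m2 m1]] by simp
  have gint: "g absolutely_integrable_on {0<..<T}"
    by (rule set_integrable_bdd[OF gm]) (use gb in auto)
  have "(\<lambda>s. (T * exp (- s)) *\<^sub>R g (\<theta> s)) absolutely_integrable_on {0<..}"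
    using cov_theta(1)[OF T _ gint[folded theta_image2[OF T]]] unfolding \<theta>_def by simp
  then have m3: "(\<lambda>s. (T * exp (- s)) *\<^sub>R g (\<theta> s)) \<in> borel_measurable (lebesgue_on {0<..})"
    by (rule ai_meas) simp
  have "gn = (\<lambda>s. (exp s / T) *\<^sub>R ((T * exp (- s)) *\<^sub>R g (\<theta> s)))"
    unfolding gn_def using T by (auto simp: field_simps exp_minus)
  then have gnm: "gn \<in> borel_measurable (lebesgue_on {0<..})"
    using borel_measurable_scaleR[OF m2 m3] by simp
  have anb: "\<exists>M. AE t in lebesgue_on {0<..T'}. \<bar>\<alpha>n t\<bar> \<le> M" if "T' > 0" for T'
  proof (intro exI)
    have "AE s in lebesgue_on {0<..T'}. \<bar>\<alpha> (\<theta> s)\<bar> \<le> M" by (rule pull[OF ab]) auto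
    then show "AE t in lebesgue_on {0<..T'}. \<bar>\<alpha>n t\<bar> \<le> M * exp T' / T"
    proof (rule AE_on_mono)
      fix s assume s: "s \<in> {0<..T'}" and b: "\<bar>\<alpha> (\<theta> s)\<bar> \<le> M"
      have sT: "s \<le> T'" using s by auto
      have "\<bar>\<alpha>n s\<bar> = \<bar>\<alpha> (\<theta> s)\<bar> * exp s / T" unfolding \<alpha>n_def using T
        by (simp add: abs_mult exp_minus field_simps)
      also have "\<dots> \<le> M * exp T' / T"
        using b T sT by (intro divide_right_mono mult_mono) auto
      finally show "\<bar>\<alpha>n s\<bar> \<le> M * exp T' / T" .
    qed
  qed
  have anl: "AE t in lebesgue_on {0<..}. \<alpha>n t \<ge> \<alpha>0 / T"
  proof -
    have "AE s in lebesgue_on {0<..}. \<alpha> (\<theta> s) \<ge> \<alpha>0" by (rule pull[OF al]) auto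
    then show ?thesis
    proof (rule AE_on_mono)
      fix s assume s: "s \<in> {0<..}" and b: "\<alpha> (\<theta> s) \<ge> \<alpha>0"
      have "\<alpha>0 / T \<le> \<alpha>0 * exp s / T" using a0 T s by (auto intro!: divide_right_mono)
      also have "\<dots> \<le> \<alpha> (\<theta> s) * exp s / T" using b T by (auto intro!: divide_right_mono)
      also have "\<dots> = \<alpha>n s" unfolding \<alpha>n_def using T by (simp add: exp_minus field_simps)
      finally show "\<alpha>n s \<ge> \<alpha>0 / T" .
    qed
  qed
  have gnb: "AE t in lebesgue_on {0<..}. norm (gn t) \<le> C"
    unfolding gn_def by (rule pull[OF gb]) auto
  have soln: "is_sol \<phi> T' \<alpha>n gn \<zeta>0 \<zeta>n \<zeta>n'" if T': "T' > 0" for T'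
  proof -
    have zint: "\<zeta>' absolutely_integrable_on {0..\<theta> s}" if "0 \<le> s" for s
      by (rule set_integrable_bdd[OF zm zb]) (use F(4)[OF that] in \<open>auto simp: \<theta>_def\<close>)
    have cz: "\<zeta>n' absolutely_integrable_on {0..s}"
        "integral {0..s} \<zeta>n' = integral {0..\<theta> s} \<zeta>'" if "0 \<le> s" for s
    proof -
      have img: "\<theta> ` {0..s} = {0..\<theta> s}" using theta_image1[OF T that] unfolding \<theta>_def .
      have "\<zeta>' absolutely_integrable_on \<theta> ` {0..s}" unfolding img by (rule zint[OF that])
      then have "\<zeta>' absolutely_integrable_on (\<lambda>s. T * (1 - exp (- s))) ` {0..s}" unfolding \<theta>_def .
      note cv = cov_theta[OF T _ this]
      show "\<zeta>n' absolutely_integrable_on {0..s}" using cv(1) unfolding \<zeta>n'_def \<theta>_def by simp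
      show "integral {0..s} \<zeta>n' = integral {0..\<theta> s} \<zeta>'"
        using cv(2) img unfolding \<zeta>n'_def \<theta>_def by simp
    qed
    have "\<zeta>n' \<in> borel_measurable (lebesgue_on {0..T'})"
      using cz(1)[of T'] T' by (intro ai_meas) auto
    moreover have "\<exists>M. AE t in lebesgue_on {0..T'}. norm (\<zeta>n' t) \<le> M"
    proof (intro exI)
      have "AE s in lebesgue_on {0..T'}. norm (\<zeta>' (\<theta> s)) \<le> Mz" by (rule pull[OF zb]) auto
      then show "AE t in lebesgue_on {0..T'}. norm (\<zeta>n' t) \<le> T * Mz"
      proof (rule AE_on_mono)
        fix s assume s: "s \<in> {0..T'}" and b: "norm (\<zeta>' (\<theta> s)) \<le> Mz"
        have "norm (\<zeta>n' s) = T * exp (- s) * norm (\<zeta>' (\<theta> s))"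
          unfolding \<zeta>n'_def using T by simp
        also have "\<dots> \<le> T * 1 * Mz" using T s b
          by (intro mult_mono) auto
        finally show "norm (\<zeta>n' s) \<le> T * Mz" by simp
      qed
    qed
    moreover have "\<forall>t\<in>{0..T'}. \<zeta>n t = \<zeta>n 0 + (LINT s:{0..t}|lebesgue. \<zeta>n' s)"
    proof
      fix t assume t: "t \<in> {0..T'}"
      have "\<theta> t \<in> {0..T}" using F(4)[of t] t unfolding \<theta>_def by auto
      then have "\<zeta>n t = \<zeta> 0 + (LINT s:{0..\<theta> t}|lebesgue. \<zeta>' s)" unfolding \<zeta>n_def by (rule zi)
      also have "(LINT s:{0..\<theta> t}|lebesgue. \<zeta>' s) = integral {0..\<theta> t} \<zeta>'"
        using zint t by (intro set_lebesgue_integral_eq_integral) auto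
      also have "\<dots> = integral {0..t} \<zeta>n'" using cz(2) t by auto
      also have "\<dots> = (LINT s:{0..t}|lebesgue. \<zeta>n' s)"
        using cz(1) t by (intro set_lebesgue_integral_eq_integral(2)[symmetric]) auto
      finally show "\<zeta>n t = \<zeta>n 0 + (LINT s:{0..t}|lebesgue. \<zeta>n' s)"
        unfolding \<zeta>n_def th0 .
    qed
    moreover have "\<zeta>n 0 = \<zeta>0" unfolding \<zeta>n_def th0 z00 ..
    moreover have "AE t in lebesgue_on {0..T'}. gn t - \<alpha>n t *\<^sub>R \<zeta>n' t \<in> subdiff \<phi> (\<zeta>n t)"
    proof -
      have eq: "gn s - \<alpha>n s *\<^sub>R \<zeta>n' s = g (\<theta> s) - \<alpha> (\<theta> s) *\<^sub>R \<zeta>' (\<theta> s)" for s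
        unfolding gn_def \<alpha>n_def \<zeta>n'_def using T by simp
      show ?thesis unfolding eq \<zeta>n_def by (rule pull[OF sub]) auto
    qed
    ultimately show ?thesis unfolding is_sol_def W1inf_def by blast
  qed
  have "AE t in lebesgue_on {0<..}. norm (gn t - \<alpha>n t *\<^sub>R \<zeta>n' t) \<le> D * C"
  proof -
    have X: "\<forall>C>0. \<forall>\<zeta>0\<in>DC C \<phi>. \<forall>(\<alpha>::real\<Rightarrow>real) (\<alpha>0::real) (g::real\<Rightarrow>real^'d) \<zeta> \<zeta>'.
       (\<alpha> \<in> borel_measurable (lebesgue_on {0<..}) \<and>
        (\<forall>T>0. \<exists>M. AE t in lebesgue_on {0<..T}. \<bar>\<alpha> t\<bar> \<le> M) \<and>
        \<alpha>0 > 0 \<and> (AE t in lebesgue_on {0<..}. \<alpha> t \<ge> \<alpha>0) \<and>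
        g \<in> borel_measurable (lebesgue_on {0<..}) \<and>
        (AE t in lebesgue_on {0<..}. norm (g t) \<le> C) \<and>
        (\<forall>T>0. is_sol \<phi> T \<alpha> g \<zeta>0 \<zeta> \<zeta>'))
       \<longrightarrow> (AE t in lebesgue_on {0<..}. norm (g t - \<alpha> t *\<^sub>R \<zeta>' t) \<le> D * C)"
      using pX unfolding propX_def by (rule conjunct2)
    have pos: "\<alpha>0 / T > 0" using a0 T by simp
    show ?thesis
      using X[rule_format, OF C z0, of \<alpha>n "\<alpha>0 / T" gn \<zeta>n \<zeta>n'] anm anb anl gnm gnb soln pos
      by blast
  qed
  then have AE1: "AE s in lebesgue_on {0<..}. norm (g (\<theta> s) - \<alpha> (\<theta> s) *\<^sub>R \<zeta>' (\<theta> s)) \<le> D * C"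
    unfolding gn_def \<alpha>n_def \<zeta>n'_def using T by simp
  have AE2: "AE t in lebesgue_on {0<..<T}. norm (g (\<theta> (\<psi> t)) - \<alpha> (\<theta> (\<psi> t)) *\<^sub>R \<zeta>' (\<theta> (\<psi> t))) \<le> D * C"
  proof (rule ae_transfer[OF AE1, where A'="{0<..}" and h=\<theta>])
    show "\<psi> s \<in> {0<..}" if "s \<in> {0<..<T}" for s using F(9) that unfolding \<psi>_def by auto
    show "\<theta> differentiable_on {0<..}" using F(7) unfolding \<theta>_def
      by (rule differentiable_on_subset) auto
    show "\<theta> (\<psi> s) = s" if "s \<in> {0<..<T}" for s using F(2) that unfolding \<psi>_def \<theta>_def by auto
  qed auto
  have AE3: "AE t in lebesgue. t \<in> {0<..<T} \<longrightarrow> norm (g t - \<alpha> t *\<^sub>R \<zeta>' t) \<le> D * C"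
  proof -
    have "AE t in lebesgue. t \<in> {0<..<T} \<longrightarrow> norm (g (\<theta> (\<psi> t)) - \<alpha> (\<theta> (\<psi> t)) *\<^sub>R \<zeta>' (\<theta> (\<psi> t))) \<le> D * C"
      using AE2 by (simp add: AE_restrict_space_iff)
    then show ?thesis
    proof (rule AE_mp[OF _ AE_I2], intro impI)
      fix t assume t: "t \<in> {0<..<T}"
        and "t \<in> {0<..<T} \<longrightarrow> norm (g (\<theta> (\<psi> t)) - \<alpha> (\<theta> (\<psi> t)) *\<^sub>R \<zeta>' (\<theta> (\<psi> t))) \<le> D * C"
      moreover have "\<theta> (\<psi> t) = t" using F(2) t unfolding \<psi>_def \<theta>_def by auto
      ultimately show "norm (g t - \<alpha> t *\<^sub>R \<zeta>' t) \<le> D * C" by simp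
    qed
  qed
  have AE4: "AE t in lebesgue. t \<notin> {0, T}"
  proof -
    have "negligible {0, T}" by simp
    then have "{0, T} \<in> null_sets lebesgue" using negligible_iff_null_sets by blast
    then show ?thesis by (rule AE_I') auto
  qed
  have "AE t in lebesgue. t \<in> {0..T} \<longrightarrow> norm (g t - \<alpha> t *\<^sub>R \<zeta>' t) \<le> D * C"
    using AE3 AE4 by eventually_elim auto
  then show ?thesis by (simp add: AE_restrict_space_iff)
qed


lemma subdiff_grad:
  fixes \<phi> :: "'a::euclidean_space \<Rightarrow> ereal"
  assumes prp: "\<And>x. \<phi> x > -\<infinity>" and zi: "z \<in> interior (effdom \<phi>)"
    and der: "((\<lambda>y. real_of_ereal (\<phi> y)) has_derivative (\<lambda>h. p \<bullet> h)) (at z)"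
    and xi: "\<xi> \<in> subdiff \<phi> z"
  shows "\<xi> = p"
proof (rule ccontr)
  assume ne: "\<xi> \<noteq> p"
  define v where "v = \<xi> - p"
  define f where "f = (\<lambda>y. real_of_ereal (\<phi> y))"
  have vpos: "v \<bullet> v > 0" using ne unfolding v_def by simp
  obtain e where e: "e > 0" "ball z e \<subseteq> effdom \<phi>" using zi mem_interior by blast
  have fin: "\<phi> y = ereal (f y)" if "y \<in> effdom \<phi>" for y
    using that prp[of y] unfolding effdom_def f_def by (cases "\<phi> y") auto
  have zin: "z \<in> effdom \<phi>" using e by auto
  have ineq: "f z + s * (\<xi> \<bullet> v) \<le> f (z + s *\<^sub>R v)" if "0 < s" "s < e / (norm v + 1)" for s
  proof -
    have "norm (s *\<^sub>R v) < e"
    proof -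
      have "norm (s *\<^sub>R v) = s * norm v" using that by simp
      also have "\<dots> \<le> s * (norm v + 1)" using that by simp
      also have "\<dots> < e"
      proof -
        have "norm v + 1 > 0" by (simp add: add_nonneg_pos)
        then show ?thesis using that by (simp add: pos_less_divide_eq)
      qed
      finally show ?thesis .
    qed
    then have "z + s *\<^sub>R v \<in> effdom \<phi>" using e by (auto simp: dist_norm)
    moreover have "\<phi> z + ereal (\<xi> \<bullet> ((z + s *\<^sub>R v) - z)) \<le> \<phi> (z + s *\<^sub>R v)"
      using xi unfolding subdiff_def by blast
    ultimately show ?thesis using fin zin by simp
  qed
  define k where "k = (\<lambda>s. f (z + s *\<^sub>R v) - f z - s * (\<xi> \<bullet> v))"
  have hd: "((\<lambda>s. f (z + s *\<^sub>R v)) has_derivative (\<lambda>s. p \<bullet> (s *\<^sub>R v))) (at 0)"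
  proof (rule has_derivative_compose[where g=f])
    show "((\<lambda>s. z + s *\<^sub>R v) has_derivative (\<lambda>s. s *\<^sub>R v)) (at 0)"
      by (auto intro!: derivative_eq_intros)
    show "(f has_derivative (\<lambda>h. p \<bullet> h)) (at (z + 0 *\<^sub>R v))" using der unfolding f_def by simp
  qed
  have "((\<lambda>s. f (z + s *\<^sub>R v)) has_field_derivative (p \<bullet> v)) (at 0)"
  proof -
    have eq: "(*) (p \<bullet> v) = (\<lambda>s. s * (p \<bullet> v))" by (auto simp: fun_eq_iff)
    show ?thesis unfolding has_field_derivative_def eq using hd by simp
  qed
  then have dk: "(k has_field_derivative (p \<bullet> v - \<xi> \<bullet> v)) (at 0)"
    unfolding k_def by (auto intro!: derivative_eq_intros)
  have "p \<bullet> v - \<xi> \<bullet> v = - (v \<bullet> v)" unfolding v_def by (simp add: algebra_simps inner_commute)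
  then have "p \<bullet> v - \<xi> \<bullet> v < 0" using vpos by simp
  from DERIV_neg_dec_right[OF dk this] obtain d where d: "d > 0" "\<forall>h>0. h < d \<longrightarrow> k 0 > k (0 + h)"
    by blast
  define e' where "e' = e / (norm v + 1)"
  define s where "s = min (d / 2) (e' / 2)"
  have ep: "e / (norm v + 1) > 0" using e by (simp add: add_nonneg_pos)
  have s: "0 < s" "s < d" "s < e / (norm v + 1)" unfolding s_def using d ep
    unfolding e'_def[symmetric] by auto
  have "k 0 > k s" using d s by auto
  moreover have "k 0 = 0" unfolding k_def by simp
  moreover have "k s \<ge> 0" using ineq[OF s(1) s(3)] unfolding k_def by simp
  ultimately show False by simp
qed


lemma lint_nonneg:
  fixes f :: "real \<Rightarrow> real"
  assumes "set_integrable lebesgue A f" "\<And>x. 0 \<le> f x"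
  shows "0 \<le> (LINT x:A|lebesgue. f x)"
proof -
  have "(LINT x:A|lebesgue. (0::real)) \<le> (LINT x:A|lebesgue. f x)"
    by (rule set_integral_mono) (use assms in auto)
  then show ?thesis by simp
qed

lemma lint_mono_set:
  fixes f :: "real \<Rightarrow> real"
  assumes fi: "set_integrable lebesgue B f" and AB: "A \<subseteq> B" and A: "A \<in> sets lebesgue"
    and f0: "\<And>x. 0 \<le> f x"
  shows "(LINT x:A|lebesgue. f x) \<le> (LINT x:B|lebesgue. f x)"
proof -
  have iA: "set_integrable lebesgue A f" using set_integrable_subset fi A AB by blast
  show ?thesis
    using iA fi unfolding set_lebesgue_integral_def set_integrable_def
    by (intro integral_mono) (use AB f0 in \<open>auto simp: indicator_def\<close>)
qed

lemma lint_split: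
  fixes f :: "real \<Rightarrow> real"
  assumes fi: "set_integrable lebesgue {0..t} f" and s: "0 \<le> s1" "s1 \<le> s2" "s2 \<le> t"
  shows "(LINT x:{0..s2}|lebesgue. f x) = (LINT x:{0..s1}|lebesgue. f x) + (LINT x:{s1<..s2}|lebesgue. f x)"
proof -
  have "{0..s2} = {0..s1} \<union> {s1<..s2}" using s by auto
  moreover have "set_integrable lebesgue {0..s1} f" "set_integrable lebesgue {s1<..s2} f"
    by (rule set_integrable_subset[OF fi]; use s in auto)+
  moreover have "{0..s1} \<inter> {s1<..s2} = {}" by auto
  ultimately show ?thesis using set_integral_Un by metis
qed

lemma gronwall_disc:
  fixes f a :: "real \<Rightarrow> real" and N :: nat
  assumes t: "0 \<le> t" and fi: "set_integrable lebesgue {0..t} f" and ai: "set_integrable lebesgue {0..t} a"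
   and f0: "\<And>s. 0 \<le> f s" and a0: "\<And>s. 0 \<le> a s"
   and K: "0 \<le> K" and lam: "0 \<le> lam" and del: "0 \<le> \<delta>"
   and N: "N > 0" and lt: "lam * t \<le> real N / 2"
   and bd: "AE s in lebesgue. s \<in> {0..t} \<longrightarrow> f s \<le> K * a s + lam * (\<delta> + (LINT r:{0..s}|lebesgue. f r))"
  shows "(LINT r:{0..t}|lebesgue. f r) \<le> 2^(N+1) * (K * (LINT r:{0..t}|lebesgue. a r) + lam * t * \<delta>)"
proof -
  define U where "U = (\<lambda>s. LINT r:{0..s}|lebesgue. f r)"
  define A where "A = (LINT r:{0..t}|lebesgue. a r)"
  define E where "E = K * A + lam * t * \<delta>"
  have A0: "0 \<le> A" unfolding A_def by (rule lint_nonneg[OF ai a0])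
  have U0: "0 \<le> U s" if "0 \<le> s" "s \<le> t" for s
    unfolding U_def by (rule lint_nonneg[OF set_integrable_subset[OF fi] f0]) (use that in auto)
  have Umono: "U s \<le> U s'" if "s \<le> s'" "s' \<le> t" for s s'
    unfolding U_def by (rule lint_mono_set[OF set_integrable_subset[OF fi] _ _ f0]) (use that in auto)
  have lm: "{x<..y} \<in> lmeasurable" for x y :: real
    by (rule bounded_set_imp_lmeasurable) auto
  have step: "U s2 \<le> 2 * U s1 + 2 * E"
    if s: "0 \<le> s1" "s1 \<le> s2" "s2 \<le> t" "s2 - s1 \<le> t / N" for s1 s2
  proof -
    have fi2: "set_integrable lebesgue {s1<..s2} f" by (rule set_integrable_subset[OF fi]) (use s in auto)
    have ai2: "set_integrable lebesgue {s1<..s2} a" by (rule set_integrable_subset[OF ai]) (use s in auto)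
    have "(LINT x:{s1<..s2}|lebesgue. f x) \<le> (LINT x:{s1<..s2}|lebesgue. K * a x + lam * (\<delta> + U s2))"
    proof (rule set_integral_mono_AE[OF fi2])
      show "set_integrable lebesgue {s1<..s2} (\<lambda>x. K * a x + lam * (\<delta> + U s2))"
        using ai2 by (intro set_integral_add(1)) (auto intro!: absolutely_integrable_on_const lm)
      show "AE x\<in>{s1<..s2} in lebesgue. f x \<le> K * a x + lam * (\<delta> + U s2)"
        using bd
      proof (rule AE_mp[OF _ AE_I2], intro impI)
        fix x assume h: "x \<in> {0..t} \<longrightarrow> f x \<le> K * a x + lam * (\<delta> + (LINT r:{0..x}|lebesgue. f r))"
          and x: "x \<in> {s1<..s2}"
        then have "f x \<le> K * a x + lam * (\<delta> + U x)" using s unfolding U_def by auto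
        also have "\<dots> \<le> K * a x + lam * (\<delta> + U s2)"
          using Umono[of x s2] x s lam by (auto intro!: mult_left_mono)
        finally show "f x \<le> K * a x + lam * (\<delta> + U s2)" .
      qed
    qed
    also have "\<dots> = K * (LINT x:{s1<..s2}|lebesgue. a x) + (s2 - s1) * (lam * (\<delta> + U s2))"
      using ai2 s by (subst set_integral_add(2)) (auto intro!: absolutely_integrable_on_const lm simp: set_integral_const)
    also have "\<dots> \<le> K * A + (s2 - s1) * (lam * (\<delta> + U s2))"
    proof -
      have "{s1<..s2} \<subseteq> {0..t}" using s by auto
      then have "(LINT x:{s1<..s2}|lebesgue. a x) \<le> A"
        unfolding A_def using lint_mono_set[OF ai _ _ a0, of "{s1<..s2}"] by auto
      then show ?thesis using K by (auto intro!: mult_left_mono)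
    qed
    also have "(s2 - s1) * (lam * (\<delta> + U s2)) = lam * (s2 - s1) * \<delta> + lam * (s2 - s1) * U s2"
      by (simp add: algebra_simps)
    also have "lam * (s2 - s1) * \<delta> \<le> lam * t * \<delta>"
      using s lam del t by (intro mult_right_mono mult_left_mono) auto
    also have "lam * (s2 - s1) * U s2 \<le> (1/2) * U s2"
    proof (rule mult_right_mono)
      have "lam * (s2 - s1) \<le> lam * (t / N)" using s lam by (intro mult_left_mono) auto
      also have "\<dots> = (lam * t) / N" by simp
      also have "\<dots> \<le> (real N / 2) / N" using lt N by (intro divide_right_mono) auto
      also have "\<dots> = 1/2" using N by simp
      finally show "lam * (s2 - s1) \<le> 1/2" .
      show "0 \<le> U s2" using U0 s by auto
    qed
    finally have "(LINT x:{s1<..s2}|lebesgue. f x) \<le> E + (1/2) * U s2" unfolding E_def by simp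
    moreover have "U s2 = U s1 + (LINT x:{s1<..s2}|lebesgue. f x)"
      unfolding U_def by (rule lint_split[OF fi s(1-3)])
    moreover have "0 \<le> U s1" using U0 s by auto
    ultimately show ?thesis by linarith
  qed
  have U00: "U 0 = 0"
  proof -
    have "U 0 \<le> U 0 + 0" by simp
    have "{0..0::real} \<in> null_sets lebesgue" using negligible_iff_null_sets by auto
    then have "AE x in lebesgue. indicator {0..0::real} x *\<^sub>R f x = 0"
      by (rule AE_I') (auto simp: indicator_def)
    moreover have "set_integrable lebesgue {0..0} f" by (rule set_integrable_subset[OF fi]) (use t in auto)
    ultimately show ?thesis unfolding U_def set_lebesgue_integral_def set_integrable_def
      by (subst integral_cong_AE[where g="\<lambda>_. 0"]) (auto dest: borel_measurable_integrable)
  qed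
  have ind: "U (real i * t / N) \<le> (2^(i+1) - 2) * E" if "i \<le> N" for i
    using that
  proof (induction i)
    case 0
    then show ?case using U00 by simp
  next
    case (Suc i)
    have "real i * t / N \<le> real (Suc i) * t / N" using t N by (intro divide_right_mono mult_right_mono) auto
    moreover have "real (Suc i) * t / N \<le> t"
    proof -
      have "real (Suc i) * t \<le> real N * t" using Suc.prems t by (intro mult_right_mono) auto
      then show ?thesis using N by (simp add: divide_le_eq mult.commute)
    qed
    moreover have "0 \<le> real i * t / N" using t by simp
    moreover have "real (Suc i) * t / N - real i * t / N \<le> t / N" by (simp add: diff_divide_distrib[symmetric] algebra_simps)
    ultimately have "U (real (Suc i) * t / N) \<le> 2 * U (real i * t / N) + 2 * E"
      by (intro step) auto
    also have "\<dots> \<le> 2 * ((2^(i+1) - 2) * E) + 2 * E" using Suc by simp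
    also have "\<dots> = (2^(Suc i + 1) - 2) * E" by (simp add: algebra_simps)
    finally show ?case .
  qed
  have E0: "0 \<le> E" unfolding E_def using K A0 lam t del by simp
  have "U t = U (real N * t / N)" using N by simp
  also have "\<dots> \<le> (2^(N+1) - 2) * E" by (rule ind) simp
  also have "\<dots> \<le> 2^(N+1) * E" using E0 by (simp add: algebra_simps)
  finally show ?thesis unfolding U_def E_def A_def .
qed


lemma pw_bound:
  fixes z1 z2 g1 g2 :: "'a::real_normed_vector"
  assumes a1: "a1 \<ge> a0" and a2: "a2 \<ge> a0" and a0: "a0 > 0"
    and g1: "norm g1 \<le> C" and x1: "norm (g1 - a1 *\<^sub>R z1) \<le> B"
    and lip: "norm ((g1 - a1 *\<^sub>R z1) - (g2 - a2 *\<^sub>R z2)) \<le> L * dz" and L: "L \<ge> 0"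
    and K1: "C + B \<le> K" and K2: "1 / a0 \<le> K"
  shows "norm (z1 - z2) \<le> K * (\<bar>1 / a1 - 1 / a2\<bar> + norm (g1 - g2)) + (L / a0) * dz"
proof -
  define x1 where "x1 = g1 - a1 *\<^sub>R z1"
  define x2 where "x2 = g2 - a2 *\<^sub>R z2"
  have z1: "z1 = (1 / a1) *\<^sub>R (g1 - x1)" using a1 a0 unfolding x1_def by simp
  have z2: "z2 = (1 / a2) *\<^sub>R (g2 - x2)" using a2 a0 unfolding x2_def by simp
  have eq: "z1 - z2 = (1 / a1 - 1 / a2) *\<^sub>R (g1 - x1) + (1 / a2) *\<^sub>R ((g1 - g2) - (x1 - x2))"
    unfolding z1 z2 by (simp add: algebra_simps)
  have ia2: "1 / a2 \<le> 1 / a0" "0 \<le> 1 / a2" using a2 a0 by (auto simp: frac_le)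
  have "norm (z1 - z2) \<le> \<bar>1 / a1 - 1 / a2\<bar> * norm (g1 - x1) + (1 / a2) * norm ((g1 - g2) - (x1 - x2))"
    unfolding eq using ia2 norm_triangle_ineq[of "(1 / a1 - 1 / a2) *\<^sub>R (g1 - x1)" "(1 / a2) *\<^sub>R ((g1 - g2) - (x1 - x2))"]
    by (simp add: abs_of_nonneg)
  also have "\<dots> \<le> \<bar>1 / a1 - 1 / a2\<bar> * K + (1 / a0) * (norm (g1 - g2) + L * dz)"
  proof (intro add_mono mult_left_mono mult_mono)
    have "norm (g1 - x1) \<le> norm g1 + norm x1" by (rule norm_triangle_ineq4)
    also have "\<dots> \<le> C + B" using g1 x1 unfolding x1_def by simp
    finally show "norm (g1 - x1) \<le> K" using K1 by simp
    have "norm ((g1 - g2) - (x1 - x2)) \<le> norm (g1 - g2) + norm (x1 - x2)" by (rule norm_triangle_ineq4)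
    then show "norm ((g1 - g2) - (x1 - x2)) \<le> norm (g1 - g2) + L * dz"
      using lip unfolding x1_def x2_def by simp
  qed (use ia2 a0 in auto)
  also have "\<dots> = \<bar>1 / a1 - 1 / a2\<bar> * K + (1 / a0) * norm (g1 - g2) + (L / a0) * dz"
    by (simp add: algebra_simps)
  also have "\<dots> \<le> \<bar>1 / a1 - 1 / a2\<bar> * K + K * norm (g1 - g2) + (L / a0) * dz"
    using mult_right_mono[OF K2 norm_ge_zero[of "g1 - g2"]] by linarith
  finally show ?thesis by (simp add: algebra_simps)
qed

lemma diff_bound:
  fixes z1 z2 z1' z2' :: "real \<Rightarrow> 'a::euclidean_space"
  assumes i1: "set_integrable lebesgue {0..s} z1'" and i2: "set_integrable lebesgue {0..s} z2'"
    and e1: "z1 s = z1 0 + (LINT r:{0..s}|lebesgue. z1' r)"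
    and e2: "z2 s = z2 0 + (LINT r:{0..s}|lebesgue. z2' r)"
  shows "norm (z1 s - z2 s) \<le> norm (z1 0 - z2 0) + (LINT r:{0..s}|lebesgue. norm (z1' r - z2' r))"
proof -
  have "z1 s - z2 s = (z1 0 - z2 0) + (LINT r:{0..s}|lebesgue. z1' r - z2' r)"
    unfolding e1 e2 set_integral_diff(2)[OF i1 i2] by simp
  then have "norm (z1 s - z2 s) \<le> norm (z1 0 - z2 0) + norm (LINT r:{0..s}|lebesgue. z1' r - z2' r)"
    by (metis norm_triangle_ineq)
  also have "norm (LINT r:{0..s}|lebesgue. z1' r - z2' r) \<le> (LINT r:{0..s}|lebesgue. norm (z1' r - z2' r))"
    by (rule set_integral_norm_bound) (rule set_integral_diff(1)[OF i1 i2])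
  finally show ?thesis by simp
qed


theorem proposition3p6:
  fixes T C \<alpha>0 D L :: real
  assumes "T > 0" "C > 0" "\<alpha>0 > 0" "D > 0"
  shows "\<exists>R>0. \<forall>(\<phi>::real^'d \<Rightarrow> ereal) \<phi>'.
     proper_fun \<phi> \<and> convex_fun \<phi> \<and> lsc_fun \<phi> \<and> propX \<phi> D \<and> C1_lip_on_DC \<phi> \<phi>' \<and>
     (\<forall>x\<in>DC (D * C) \<phi>. \<forall>y\<in>DC (D * C) \<phi>. norm (\<phi>' x - \<phi>' y) \<le> L * norm (x - y))
     \<longrightarrow>
     (\<forall>\<zeta>01 \<zeta>02 \<alpha>1 \<alpha>2 g1 g2 \<zeta>1 \<zeta>1' \<zeta>2 \<zeta>2'.
        \<zeta>01 \<in> DC C \<phi> \<and> \<zeta>02 \<in> DC C \<phi> \<and>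
        \<alpha>1 \<in> borel_measurable (lebesgue_on {0..T}) \<and>
        \<alpha>2 \<in> borel_measurable (lebesgue_on {0..T}) \<and>
        (\<exists>M. AE t in lebesgue_on {0..T}. \<bar>\<alpha>1 t\<bar> \<le> M) \<and>
        (\<exists>M. AE t in lebesgue_on {0..T}. \<bar>\<alpha>2 t\<bar> \<le> M) \<and>
        (AE t in lebesgue_on {0..T}. \<alpha>1 t \<ge> \<alpha>0) \<and>
        (AE t in lebesgue_on {0..T}. \<alpha>2 t \<ge> \<alpha>0) \<and>
        g1 \<in> borel_measurable (lebesgue_on {0..T}) \<and>
        g2 \<in> borel_measurable (lebesgue_on {0..T}) \<and>
        (AE t in lebesgue_on {0..T}. norm (g1 t) \<le> C) \<and>
        (AE t in lebesgue_on {0..T}. norm (g2 t) \<le> C) \<and>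
        is_sol \<phi> T \<alpha>1 g1 \<zeta>01 \<zeta>1 \<zeta>1' \<and>
        is_sol \<phi> T \<alpha>2 g2 \<zeta>02 \<zeta>2 \<zeta>2'
        \<longrightarrow>
        (\<forall>t\<in>{0<..<T}.
           (LINT \<tau>:{0..t}|lebesgue. norm (\<zeta>1' \<tau> - \<zeta>2' \<tau>)) + norm (\<zeta>1 t - \<zeta>2 t)
           \<le> R * (norm (\<zeta>01 - \<zeta>02) +
                 (LINT \<tau>:{0..t}|lebesgue. \<bar>1 / \<alpha>1 \<tau> - 1 / \<alpha>2 \<tau>\<bar> + norm (g1 \<tau> - g2 \<tau>)))))"
proof -
  define L' where "L' = max L 0"
  define lam where "lam = L' / \<alpha>0"
  define K where "K = C + D * C + 1 / \<alpha>0"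
  define N :: nat where "N = 2 * nat \<lceil>lam * T\<rceil> + 1"
  define R where "R = 1 + 2^(N+2) * (K + lam * T)"
  have T: "T > 0" and C: "C > 0" and a0: "\<alpha>0 > 0" and D: "D > 0" using assms by auto
  have L'0: "0 \<le> L'" unfolding L'_def by simp
  have lam0: "0 \<le> lam" unfolding lam_def using L'0 a0 by simp
  have K0: "0 \<le> K" unfolding K_def using C D a0 by simp
  have DC: "D * C > 0" using C D by simp
  have Npos: "N > 0" unfolding N_def by simp
  have lamN: "lam * T \<le> real N / 2"
  proof -
    have "lam * T \<le> real (nat \<lceil>lam * T\<rceil>)" by linarith
    then show ?thesis unfolding N_def by simp
  qed
  have Rpos: "R > 0" unfolding R_def using K0 lam0 T by (simp add: add_pos_nonneg)
  show ?thesis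
  proof (intro exI[of _ R] conjI Rpos allI impI ballI)
    fix \<phi> :: "real^'d \<Rightarrow> ereal" and \<phi>' \<zeta>01 \<zeta>02 \<alpha>1 \<alpha>2 g1 g2 \<zeta>1 \<zeta>1' \<zeta>2 \<zeta>2' t
    assume H: "proper_fun \<phi> \<and> convex_fun \<phi> \<and> lsc_fun \<phi> \<and> propX \<phi> D \<and> C1_lip_on_DC \<phi> \<phi>' \<and>
     (\<forall>x\<in>DC (D * C) \<phi>. \<forall>y\<in>DC (D * C) \<phi>. norm (\<phi>' x - \<phi>' y) \<le> L * norm (x - y))"
    assume H2: "\<zeta>01 \<in> DC C \<phi> \<and> \<zeta>02 \<in> DC C \<phi> \<and>
        \<alpha>1 \<in> borel_measurable (lebesgue_on {0..T}) \<and>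
        \<alpha>2 \<in> borel_measurable (lebesgue_on {0..T}) \<and>
        (\<exists>M. AE t in lebesgue_on {0..T}. \<bar>\<alpha>1 t\<bar> \<le> M) \<and>
        (\<exists>M. AE t in lebesgue_on {0..T}. \<bar>\<alpha>2 t\<bar> \<le> M) \<and>
        (AE t in lebesgue_on {0..T}. \<alpha>1 t \<ge> \<alpha>0) \<and>
        (AE t in lebesgue_on {0..T}. \<alpha>2 t \<ge> \<alpha>0) \<and>
        g1 \<in> borel_measurable (lebesgue_on {0..T}) \<and>
        g2 \<in> borel_measurable (lebesgue_on {0..T}) \<and>
        (AE t in lebesgue_on {0..T}. norm (g1 t) \<le> C) \<and>
        (AE t in lebesgue_on {0..T}. norm (g2 t) \<le> C) \<and>
        is_sol \<phi> T \<alpha>1 g1 \<zeta>01 \<zeta>1 \<zeta>1' \<and>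
        is_sol \<phi> T \<alpha>2 g2 \<zeta>02 \<zeta>2 \<zeta>2'"
    assume t: "t \<in> {0<..<T}"
    from H have pr: "proper_fun \<phi>" and pX: "propX \<phi> D" and c1: "C1_lip_on_DC \<phi> \<phi>'"
      and lip: "\<forall>x\<in>DC (D * C) \<phi>. \<forall>y\<in>DC (D * C) \<phi>. norm (\<phi>' x - \<phi>' y) \<le> L * norm (x - y)"
      by auto
    from H2 have z01: "\<zeta>01 \<in> DC C \<phi>" and z02: "\<zeta>02 \<in> DC C \<phi>"
      and am1: "\<alpha>1 \<in> borel_measurable (lebesgue_on {0..T})"
      and am2: "\<alpha>2 \<in> borel_measurable (lebesgue_on {0..T})"
      and al1: "AE t in lebesgue_on {0..T}. \<alpha>1 t \<ge> \<alpha>0"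
      and al2: "AE t in lebesgue_on {0..T}. \<alpha>2 t \<ge> \<alpha>0"
      and gm1: "g1 \<in> borel_measurable (lebesgue_on {0..T})"
      and gm2: "g2 \<in> borel_measurable (lebesgue_on {0..T})"
      and gb1: "AE t in lebesgue_on {0..T}. norm (g1 t) \<le> C"
      and gb2: "AE t in lebesgue_on {0..T}. norm (g2 t) \<le> C"
      and sol1: "is_sol \<phi> T \<alpha>1 g1 \<zeta>01 \<zeta>1 \<zeta>1'"
      and sol2: "is_sol \<phi> T \<alpha>2 g2 \<zeta>02 \<zeta>2 \<zeta>2'"
      by auto
    from H2 obtain M1 M2 where ab1: "AE t in lebesgue_on {0..T}. \<bar>\<alpha>1 t\<bar> \<le> M1"
      and ab2: "AE t in lebesgue_on {0..T}. \<bar>\<alpha>2 t\<bar> \<le> M2" by auto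
    from sol1 obtain Mz1 where z1m: "\<zeta>1' \<in> borel_measurable (lebesgue_on {0..T})"
      and z1b: "AE t in lebesgue_on {0..T}. norm (\<zeta>1' t) \<le> Mz1"
      and z1i: "\<And>t. t \<in> {0..T} \<Longrightarrow> \<zeta>1 t = \<zeta>1 0 + (LINT s:{0..t}|lebesgue. \<zeta>1' s)"
      and z10: "\<zeta>1 0 = \<zeta>01"
      and sub1: "AE t in lebesgue_on {0..T}. g1 t - \<alpha>1 t *\<^sub>R \<zeta>1' t \<in> subdiff \<phi> (\<zeta>1 t)"
      unfolding is_sol_def W1inf_def by blast
    from sol2 obtain Mz2 where z2m: "\<zeta>2' \<in> borel_measurable (lebesgue_on {0..T})"
      and z2b: "AE t in lebesgue_on {0..T}. norm (\<zeta>2' t) \<le> Mz2"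
      and z2i: "\<And>t. t \<in> {0..T} \<Longrightarrow> \<zeta>2 t = \<zeta>2 0 + (LINT s:{0..t}|lebesgue. \<zeta>2' s)"
      and z20: "\<zeta>2 0 = \<zeta>02"
      and sub2: "AE t in lebesgue_on {0..T}. g2 t - \<alpha>2 t *\<^sub>R \<zeta>2' t \<in> subdiff \<phi> (\<zeta>2 t)"
      unfolding is_sol_def W1inf_def by blast
    have xb1: "AE s in lebesgue_on {0..T}. norm (g1 s - \<alpha>1 s *\<^sub>R \<zeta>1' s) \<le> D * C"
      by (rule propX_bound[OF pX T C a0 z01 am1 ab1 al1 gm1 gb1 sol1])
    have xb2: "AE s in lebesgue_on {0..T}. norm (g2 s - \<alpha>2 s *\<^sub>R \<zeta>2' s) \<le> D * C"
      by (rule propX_bound[OF pX T C a0 z02 am2 ab2 al2 gm2 gb2 sol2])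
    have prp: "\<And>x. \<phi> x > -\<infinity>" using pr unfolding proper_fun_def by auto
    have grad: "\<xi> = \<phi>' z" if "\<xi> \<in> subdiff \<phi> z" "norm \<xi> \<le> D * C" for \<xi> z
    proof -
      have "z \<in> DC (D * C) \<phi>"
        using that unfolding DC_def effdom_def subdiff_def by blast
      then have "z \<in> interior (effdom \<phi>) \<and>
               ((\<lambda>y. real_of_ereal (\<phi> y)) has_derivative (\<lambda>h. \<phi>' z \<bullet> h)) (at z)"
        using c1 DC unfolding C1_lip_on_DC_def by blast
      then show ?thesis using subdiff_grad[OF prp _ _ that(1)] by blast
    qed
    have inDC: "z \<in> DC (D * C) \<phi>" if "\<xi> \<in> subdiff \<phi> z" "norm \<xi> \<le> D * C" for \<xi> z
      using that unfolding DC_def effdom_def subdiff_def by blast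
    have key: "norm (\<zeta>1' s - \<zeta>2' s) \<le> K * (\<bar>1 / \<alpha>1 s - 1 / \<alpha>2 s\<bar> + norm (g1 s - g2 s))
                 + lam * norm (\<zeta>1 s - \<zeta>2 s)"
      if s1: "g1 s - \<alpha>1 s *\<^sub>R \<zeta>1' s \<in> subdiff \<phi> (\<zeta>1 s)"
        and s2: "g2 s - \<alpha>2 s *\<^sub>R \<zeta>2' s \<in> subdiff \<phi> (\<zeta>2 s)"
        and b1: "norm (g1 s - \<alpha>1 s *\<^sub>R \<zeta>1' s) \<le> D * C"
        and b2: "norm (g2 s - \<alpha>2 s *\<^sub>R \<zeta>2' s) \<le> D * C"
        and l1: "\<alpha>1 s \<ge> \<alpha>0" and l2: "\<alpha>2 s \<ge> \<alpha>0" and n1: "norm (g1 s) \<le> C" for s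
    proof -
      have e1: "g1 s - \<alpha>1 s *\<^sub>R \<zeta>1' s = \<phi>' (\<zeta>1 s)" by (rule grad[OF s1 b1])
      have e2: "g2 s - \<alpha>2 s *\<^sub>R \<zeta>2' s = \<phi>' (\<zeta>2 s)" by (rule grad[OF s2 b2])
      have "norm (\<phi>' (\<zeta>1 s) - \<phi>' (\<zeta>2 s)) \<le> L * norm (\<zeta>1 s - \<zeta>2 s)"
        using lip inDC[OF s1 b1] inDC[OF s2 b2] by blast
      also have "\<dots> \<le> L' * norm (\<zeta>1 s - \<zeta>2 s)" unfolding L'_def
        by (intro mult_right_mono) auto
      finally have lp: "norm ((g1 s - \<alpha>1 s *\<^sub>R \<zeta>1' s) - (g2 s - \<alpha>2 s *\<^sub>R \<zeta>2' s)) \<le> L' * norm (\<zeta>1 s - \<zeta>2 s)"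
        unfolding e1 e2 .
      have "norm (\<zeta>1' s - \<zeta>2' s) \<le> K * (\<bar>1 / \<alpha>1 s - 1 / \<alpha>2 s\<bar> + norm (g1 s - g2 s))
                 + (L' / \<alpha>0) * norm (\<zeta>1 s - \<zeta>2 s)"
        by (rule pw_bound[OF l1 l2 a0 n1 b1 lp L'0]) (use a0 C D in \<open>auto simp: K_def\<close>)
      then show ?thesis unfolding lam_def .
    qed
    have pw: "AE s in lebesgue_on {0..T}. norm (\<zeta>1' s - \<zeta>2' s) \<le> K * (\<bar>1 / \<alpha>1 s - 1 / \<alpha>2 s\<bar> + norm (g1 s - g2 s))
                 + lam * norm (\<zeta>1 s - \<zeta>2 s)"
      using sub1 sub2 xb1 xb2 al1 al2 gb1 by eventually_elim (rule key)
    have zi1: "set_integrable lebesgue {0..s} \<zeta>1'" if "s \<le> T" for s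
      by (rule set_integrable_bdd[OF z1m z1b]) (use that in auto)
    have zi2: "set_integrable lebesgue {0..s} \<zeta>2'" if "s \<le> T" for s
      by (rule set_integrable_bdd[OF z2m z2b]) (use that in auto)
    have tT: "t \<le> T" "0 \<le> t" using t by auto
    define f where "f = (\<lambda>s. norm (\<zeta>1' s - \<zeta>2' s))"
    define a where "a = (\<lambda>s. \<bar>1 / \<alpha>1 s - 1 / \<alpha>2 s\<bar> + norm (g1 s - g2 s))"
    have fi: "set_integrable lebesgue {0..t} f"
      unfolding f_def by (intro set_integrable_norm set_integral_diff(1) zi1 zi2 tT)
    have im1: "(\<lambda>s. 1 / \<alpha>1 s) \<in> borel_measurable (lebesgue_on {0..T})" using am1 by measurable
    have im2: "(\<lambda>s. 1 / \<alpha>2 s) \<in> borel_measurable (lebesgue_on {0..T})" using am2 by measurable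
    have ib1: "AE s in lebesgue_on {0..T}. norm (1 / \<alpha>1 s) \<le> 1 / \<alpha>0"
      using al1 by (rule AE_mp[OF _ AE_I2]) (use a0 in \<open>auto simp: frac_le\<close>)
    have ib2: "AE s in lebesgue_on {0..T}. norm (1 / \<alpha>2 s) \<le> 1 / \<alpha>0"
      using al2 by (rule AE_mp[OF _ AE_I2]) (use a0 in \<open>auto simp: frac_le\<close>)
    have ii1: "set_integrable lebesgue {0..t} (\<lambda>s. 1 / \<alpha>1 s)"
      by (rule set_integrable_bdd[OF im1 ib1]) (use tT in auto)
    have ii2: "set_integrable lebesgue {0..t} (\<lambda>s. 1 / \<alpha>2 s)"
      by (rule set_integrable_bdd[OF im2 ib2]) (use tT in auto)
    have gi1: "set_integrable lebesgue {0..t} g1"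
      by (rule set_integrable_bdd[OF gm1 gb1]) (use tT in auto)
    have gi2: "set_integrable lebesgue {0..t} g2"
      by (rule set_integrable_bdd[OF gm2 gb2]) (use tT in auto)
    have ai: "set_integrable lebesgue {0..t} a"
      unfolding a_def
      by (intro set_integral_add(1) set_integrable_abs set_integrable_norm set_integral_diff(1) ii1 ii2 gi1 gi2)
    have f0: "\<And>s. 0 \<le> f s" and a00: "\<And>s. 0 \<le> a s" unfolding f_def a_def by auto
    define \<delta> where "\<delta> = norm (\<zeta>01 - \<zeta>02)"
    have bd: "AE s in lebesgue. s \<in> {0..t} \<longrightarrow> f s \<le> K * a s + lam * (\<delta> + (LINT r:{0..s}|lebesgue. f r))"
    proof -
      have "AE s in lebesgue. s \<in> {0..T} \<longrightarrow> norm (\<zeta>1' s - \<zeta>2' s) \<le> K * (\<bar>1 / \<alpha>1 s - 1 / \<alpha>2 s\<bar> + norm (g1 s - g2 s))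
                 + lam * norm (\<zeta>1 s - \<zeta>2 s)"
        using pw by (simp add: AE_restrict_space_iff)
      then show ?thesis
      proof (rule AE_mp[OF _ AE_I2], intro impI)
        fix s assume h: "s \<in> {0..T} \<longrightarrow> norm (\<zeta>1' s - \<zeta>2' s) \<le> K * (\<bar>1 / \<alpha>1 s - 1 / \<alpha>2 s\<bar> + norm (g1 s - g2 s))
                 + lam * norm (\<zeta>1 s - \<zeta>2 s)" and s: "s \<in> {0..t}"
        then have sT: "s \<in> {0..T}" using tT by auto
        have "norm (\<zeta>1 s - \<zeta>2 s) \<le> norm (\<zeta>1 0 - \<zeta>2 0) + (LINT r:{0..s}|lebesgue. norm (\<zeta>1' r - \<zeta>2' r))"
          by (rule diff_bound[OF zi1 zi2 z1i[OF sT] z2i[OF sT]]) (use sT in auto)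
        then have "lam * norm (\<zeta>1 s - \<zeta>2 s) \<le> lam * (\<delta> + (LINT r:{0..s}|lebesgue. f r))"
          unfolding \<delta>_def f_def z10 z20 using lam0 by (rule mult_left_mono)
        then show "f s \<le> K * a s + lam * (\<delta> + (LINT r:{0..s}|lebesgue. f r))"
          using h sT unfolding f_def a_def by linarith
      qed
    qed
    have lt: "lam * t \<le> real N / 2" using lamN mult_left_mono[OF tT(1) lam0] by linarith
    have gr: "(LINT r:{0..t}|lebesgue. f r) \<le> 2^(N+1) * (K * (LINT r:{0..t}|lebesgue. a r) + lam * t * \<delta>)"
      by (rule gronwall_disc[OF tT(2) fi ai f0 a00 K0 lam0 _ Npos lt bd]) (simp add: \<delta>_def)
    have nb: "norm (\<zeta>1 t - \<zeta>2 t) \<le> \<delta> + (LINT r:{0..t}|lebesgue. f r)"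
      using diff_bound[OF zi1[OF tT(1)] zi2[OF tT(1)] z1i z2i] tT unfolding \<delta>_def f_def z10 z20 by auto
    define A where "A = (LINT r:{0..t}|lebesgue. a r)"
    have A0: "0 \<le> A" unfolding A_def by (rule lint_nonneg[OF ai a00])
    have d0: "0 \<le> \<delta>" unfolding \<delta>_def by simp
    have "(LINT r:{0..t}|lebesgue. f r) + norm (\<zeta>1 t - \<zeta>2 t) \<le> \<delta> + 2 * (2^(N+1) * (K * A + lam * t * \<delta>))"
      using gr nb unfolding A_def by linarith
    also have "\<dots> \<le> \<delta> + 2^(N+2) * (K * A + lam * T * \<delta>)"
      using lam0 tT d0 by (simp add: mult_left_mono mult_right_mono)
    also have "\<dots> \<le> R * (\<delta> + A)"
    proof -
      have "K * A + lam * T * \<delta> \<le> (K + lam * T) * (\<delta> + A)"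
        using K0 lam0 T A0 d0 by (simp add: algebra_simps add_nonneg_nonneg mult_nonneg_nonneg)
      then have "2^(N+2) * (K * A + lam * T * \<delta>) \<le> 2^(N+2) * ((K + lam * T) * (\<delta> + A))"
        by (intro mult_left_mono) auto
      then show ?thesis unfolding R_def using A0 by (simp add: algebra_simps)
    qed
    finally show "(LINT \<tau>:{0..t}|lebesgue. norm (\<zeta>1' \<tau> - \<zeta>2' \<tau>)) + norm (\<zeta>1 t - \<zeta>2 t)
           \<le> R * (norm (\<zeta>01 - \<zeta>02) +
                 (LINT \<tau>:{0..t}|lebesgue. \<bar>1 / \<alpha>1 \<tau> - 1 / \<alpha>2 \<tau>\<bar> + norm (g1 \<tau> - g2 \<tau>)))"
      unfolding f_def A_def a_def \<delta>_def .
  qed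
qed

end
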